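(* In the setting described in the context, for every $\delta\le\delta_0$ and every $k\ge0$, the tubular neighborhood $$T_k(\delta)=\gamma_k\big(B(\gamma_k^{-1}L_k,\delta)\big)$$ of $L_k$ is disjoint from $L_{k+1}$.
   Context: $\mathbb{R}^{2,1}$ is $\mathbb{R}^3$ with $\mathbb{B}(u,v)=u_1v_1+u_2v_2-u_3v_3$; $\mathbb{E}$ is the affine space modelled on it; $\operatorname{Isom}^0(\mathbb{E})$ consists of maps $x\mapsto gx+b$ with $g\in\mathrm{SO}^0(2,1)$. $\rho$ is Euclidean distance and $B(S,\delta)$ the open Euclidean $\delta$-neighborhood. Crooked planes: with $v_0=(1,0,0)$, $S_0=\{(0,u_2,u_3):|u_3|\ge|u_2|\}$, $W_0^\mp=\{\pm u_1\le 0$ ... $\}$ precisely $W_0^-=\{u_1\le0,u_2=u_3\}$, $W_0^+=\{u_1\ge0,u_2=-u_3\}$, $\mathcal{C}_0=W_0^-\cup S_0\cup W_0^+$; for unit-spacelike $u$ and $g\in\mathrm{SO}^0(2,1)$ with $gv_0=u$, $\mathcal{C}(u,p)=p+g(\mathcal{C}_0)$ has vertex $p$ and stem $p+g(S_0)$; the crooked half-space $\mathcal{H}(u,p)$ is the component of $\mathbb{E}-\mathcal{C}(u,p)$ containing $p+\{w:\mathbb{B}(w,w)<0,w_3>0,\mathbb{B}(w,u)>0\}$, and its angle is the length of the arc $\{w\in S^1:\mathbb{B}(w,u)>0\}$ of $S^1=\{(\cos\phi,\sin\phi,1)\}$. Setting: $h_1,\dots,h_m\in\operatorname{Isom}^0(\mathbb{E})$,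 pairwise disjoint crooked half-spaces $\mathcal{H}_i^j$ ($(i,j)\in\{1,\dots,m\}\times\{+1,-1\}$) with $h_i(\mathcal{H}_i^-)=\mathbb{E}-\overline{\mathcal{H}_i^+}$, $\Gamma=\langle h_1,\dots,h_m\rangle$, $h_i^j:=h_i^{\,j}$, $X=\mathbb{E}-\bigcup\overline{\mathcal{H}_i^j}$. $\delta_0>0$ is such that $B(\mathbb{E}-\mathcal{H}_i^j,\delta_0)\subset\mathbb{E}-h_i^j\overline{\mathcal{H}_{i'}^{j'}}$ whenever $(i,j)\ne(i',-j')$. A point $p\in\mathbb{E}-\Gamma\overline{X}$ is given, together with a sequence $(i_k,j_k)_{k\ge0}$ with $(i_k,j_k)\ne(i_{k+1},-j_{k+1})$, elements $\gamma_k=h_{i_0}^{j_0}\cdots h_{i_{k-1}}^{j_{k-1}}$, and crooked half-spaces $\mathfrak{H}_k=\gamma_k\mathcal{H}_{i_k}^{j_k}$ with $\mathfrak{H}_k\supsetneq\mathfrak{H}_{k+1}$, $p\in\mathfrak{H}_k$, and the angle of $\mathfrak{H}_0$ less than $\pi/2$. $P$ is an affine plane through $p$ whose direction is a definite plane (on which $\mathbb{B}$ is positive definite) and which contains the vertex of no crooked plane $\gamma\partial\mathcal{H}_i^j$; then each $\partial\mathfrak{H}_k\cap P$ is a zigzag (two rays joined by a segment, the intersection of $P$ with the stem), whose vertices are the endpoints of this segment. $\nu$ is a line in $P$ parallel to the segment $P\cap(\text{stem of }\partial\mathfrak{H}_0)$. For each $k$, $L_k\subset P$ is the line perpendicular (in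 the Euclidean sense) to $\nu$ which bounds a half-plane $\Pi_k\subset P$ containing $\mathfrak{H}_k\cap P$ and passes through a vertex of the zigzag $\partial\mathfrak{H}_k\cap P$. *)

theory Defs
  imports "HOL-Analysis.Analysis"
begin

type_synonym pt = "real^3"

definition mB :: "pt \<Rightarrow> pt \<Rightarrow> real" where
  "mB u v = u$1 * v$1 + u$2 * v$2 - u$3 * v$3"

text \<open>SO^0(2,1): B-preserving, determinant one, time-orientation preserving
  (this is the identity component).\<close>
definition SO0 :: "(real^3^3) set" where
  "SO0 = {g. (\<forall>u v. mB (g *v u) (g *v v) = mB u v) \<and> det g = 1 \<and> g$3$3 > 0}"

definition isom0 :: "(pt \<Rightarrow> pt) \<Rightarrow> bool" where
  "isom0 f \<longleftrightarrow> (\<exists>g b. g \<in> SO0 \<and> f = (\<lambda>x. g *v x + b))"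

definition nbhd :: "pt set \<Rightarrow> real \<Rightarrow> pt set" where
  "nbhd S \<delta> = {x. \<exists>s\<in>S. dist x s < \<delta>}"

definition v0 :: pt where "v0 = vector [1, 0, 0]"

definition S0 :: "pt set" where
  "S0 = {x. x$1 = 0 \<and> \<bar>x$3\<bar> \<ge> \<bar>x$2\<bar>}"
definition W0m :: "pt set" where
  "W0m = {x. x$1 \<le> 0 \<and> x$2 = x$3}"
definition W0p :: "pt set" where
  "W0p = {x. x$1 \<ge> 0 \<and> x$2 = - x$3}"
definition C0 :: "pt set" where
  "C0 = W0m \<union> S0 \<union> W0p"

definition unit_spacelike :: "pt \<Rightarrow> bool" where
  "unit_spacelike u \<longleftrightarrow> mB u u = 1"

text \<open>A choice of g in SO^0(2,1) with g v0 = u (the crooked plane does not depend on it).\<close>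
definition gsel :: "pt \<Rightarrow> real^3^3" where
  "gsel u = (SOME g. g \<in> SO0 \<and> g *v v0 = u)"

definition crooked_plane :: "pt \<Rightarrow> pt \<Rightarrow> pt set" where
  "crooked_plane u p = (\<lambda>x. p + gsel u *v x) ` C0"

definition stem :: "pt \<Rightarrow> pt \<Rightarrow> pt set" where
  "stem u p = (\<lambda>x. p + gsel u *v x) ` S0"

definition hs_cone :: "pt \<Rightarrow> pt set" where
  "hs_cone u = {w. mB w w < 0 \<and> w$3 > 0 \<and> mB w u > 0}"

definition crooked_halfspace :: "pt \<Rightarrow> pt \<Rightarrow> pt set" where
  "crooked_halfspace u p =
     \<Union> {connected_component_set (- crooked_plane u p) x | x. x \<in> (\<lambda>w. p + w) ` hs_cone u}"

definition hs_angle :: "pt \<Rightarrow> real" where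
  "hs_angle u = measure lebesgue {\<phi> \<in> {0..<2*pi}. mB (vector [cos \<phi>, sin \<phi>, 1]) u > 0}"

definition Idx :: "nat \<Rightarrow> (nat \<times> int) set" where
  "Idx m = {1..m} \<times> {1, -1}"

definition hpow :: "(nat \<Rightarrow> pt \<Rightarrow> pt) \<Rightarrow> nat \<Rightarrow> int \<Rightarrow> pt \<Rightarrow> pt" where
  "hpow h i j = (if j = 1 then h i else inv (h i))"

inductive_set genGroup :: "nat \<Rightarrow> (nat \<Rightarrow> pt \<Rightarrow> pt) \<Rightarrow> (pt \<Rightarrow> pt) set"
  for m h where
  gen_id: "id \<in> genGroup m h"
| gen_step: "\<gamma> \<in> genGroup m h \<Longrightarrow> (i, j) \<in> Idx m \<Longrightarrow> \<gamma> \<circ> hpow h i j \<in> genGroup m h"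

primrec gam :: "(nat \<Rightarrow> pt \<Rightarrow> pt) \<Rightarrow> (nat \<Rightarrow> nat) \<Rightarrow> (nat \<Rightarrow> int) \<Rightarrow> nat \<Rightarrow> pt \<Rightarrow> pt" where
  "gam h ik jk 0 = id"
| "gam h ik jk (Suc k) = gam h ik jk k \<circ> hpow h (ik k) (jk k)"

end

theory Submission
  imports Defs
begin


definition gm :: "pt \<Rightarrow> real^3^3" where
 "gm u = (let r = sqrt (u$1^2 + u$2^2) in
   vector [vector [u$1, - u$2 / r, u$3*u$1/r], vector [u$2, u$1/r, u$3*u$2/r], vector [u$3, 0, r]])"

lemma gm_ok:
  assumes "unit_spacelike u"
  shows "gm u \<in> SO0 \<and> gm u *v v0 = u"
proof -
  define r where "r = sqrt (u$1^2 + u$2^2)"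
  have u: "u$1^2 + u$2^2 - u$3^2 = 1" using assms by (simp add: unit_spacelike_def mB_def power2_eq_square)
  have r2: "r^2 = u$1^2 + u$2^2" unfolding r_def by simp
  have rpos: "r > 0" unfolding r_def using u
    by (smt (verit) real_sqrt_gt_zero zero_le_power2)
  have g: "\<And>i j. gm u $ i $ j = (vector [vector [u$1, - u$2 / r, u$3*u$1/r], vector [u$2, u$1/r, u$3*u$2/r], vector [u$3, 0, r]] :: real^3^3) $ i $ j"
    by (simp add: gm_def r_def Let_def)
  have mv: "\<And>x. gm u *v x = vector [u$1*x$1 - u$2/r*x$2 + u$3*u$1/r*x$3, u$2*x$1 + u$1/r*x$2 + u$3*u$2/r*x$3, u$3*x$1 + r*x$3]"
    by (simp add: vec_eq_iff forall_3 matrix_vector_mult_def sum_3 g)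
  have pres: "mB (gm u *v x) (gm u *v y) = mB x y" for x y
  proof -
    have e: "r*r = u$1*u$1 + u$2*u$2" using r2 by (simp add: power2_eq_square)
    have e2: "u$1*u$1 + u$2*u$2 - u$3*u$3 = 1" using u by (simp add: power2_eq_square)
    have "r*r*(mB (gm u *v x) (gm u *v y)) = r*r*(mB x y)"
      unfolding mv mB_def using rpos apply (simp add: field_simps)
      using e e2 by algebra
    then show ?thesis using rpos by simp
  qed
  have det: "det (gm u) = 1"
  proof -
    have "r*r*det (gm u) = r*r" unfolding det_3 g using rpos apply (simp add: field_simps)
      using r2 u by (simp add: power2_eq_square) algebra?
    then show ?thesis using rpos by simp
  qed
  have "gm u $ 3 $ 3 > 0" using rpos g by simp
  moreover have "gm u *v v0 = u" unfolding mv v0_def by (simp add: vec_eq_iff forall_3)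
  ultimately show ?thesis using pres det unfolding SO0_def by auto
qed
lemma gsel_ok: assumes "unit_spacelike u" shows "gsel u \<in> SO0 \<and> gsel u *v v0 = u"
  unfolding gsel_def by (rule someI, rule gm_ok[OF assms])

definition Bset :: "pt set" where
 "Bset = {x. x$1 > 0 \<and> x$2 + x$3 > 0} \<union> {x. x$1 < 0 \<and> x$2 - x$3 > 0} \<union> {x. x$1 = 0 \<and> x$2 > \<bar>x$3\<bar>}"

lemma Bset_conn: "connected Bset"
proof (rule starlike_imp_connected, unfold starlike_def, intro bexI ballI)
  let ?e = "vector [0,1,0] :: pt"
  show "?e \<in> Bset" by (simp add: Bset_def)
  fix z assume z: "z \<in> Bset"
  show "closed_segment ?e z \<subseteq> Bset"
  proof
    fix y assume "y \<in> closed_segment ?e z"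
    then obtain s where s: "0 \<le> s" "s \<le> 1" and y: "y = (1 - s) *\<^sub>R ?e + s *\<^sub>R z"
      by (auto simp: closed_segment_def)
    have y1: "y$1 = s * z$1" "y$2 = (1-s) + s*z$2" "y$3 = s*z$3" by (simp_all add: y)
    show "y \<in> Bset"
    proof (cases "s = 0")
      case True then show ?thesis using y1 by (simp add: Bset_def)
    next
      case False
      then have sp: "s > 0" using s by simp
      from z consider "z$1 > 0" "z$2 + z$3 > 0" | "z$1 < 0" "z$2 - z$3 > 0" | "z$1 = 0" "z$2 > \<bar>z$3\<bar>"
        by (auto simp: Bset_def)
      then show ?thesis
      proof cases
        case 1
        have "y$1 > 0" using y1 sp 1 by simp
        moreover have "y$2 + y$3 > 0" using y1 sp s 1
          by (smt (verit) mult_pos_pos distrib_left)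
        ultimately show ?thesis by (simp add: Bset_def)
      next
        case 2
        have "y$1 < 0" using y1 sp 2 by (simp add: mult_pos_neg)
        moreover have "y$2 - y$3 > 0" using y1 sp s 2
          by (smt (verit) mult_pos_pos right_diff_distrib)
        ultimately show ?thesis by (simp add: Bset_def)
      next
        case 3
        have "y$1 = 0" using y1 3 by simp
        moreover have "y$2 > \<bar>y$3\<bar>"
        proof -
          have "s * z$2 > s * \<bar>z$3\<bar>" using sp 3 by simp
          then show ?thesis using y1 s by (simp add: abs_mult)
        qed
        ultimately show ?thesis by (simp add: Bset_def)
      qed
    qed
  qed
qed

lemma Bset_C0: "Bset \<inter> C0 = {}"
  by (auto simp: Bset_def C0_def W0m_def W0p_def S0_def)

lemma S0_closure: "S0 \<subseteq> closure Bset"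
proof
  fix x assume x: "x \<in> S0"
  have x1: "x$1 = 0" "\<bar>x$3\<bar> \<ge> \<bar>x$2\<bar>" using x by (auto simp: S0_def)
  obtain e where e: "\<And>t. t > 0 \<Longrightarrow> x + t *\<^sub>R e \<in> Bset"
  proof (cases "x$2 + x$3 \<ge> 0")
    case True
    show ?thesis
      by (rule that[of "vector [1,1,1]"]) (use True x1 in \<open>simp add: Bset_def\<close>)
  next
    case False
    then have "x$2 - x$3 \<ge> 0" using x1 by (auto simp: abs_if split: if_splits)
    show ?thesis
      by (rule that[of "vector [-1,1,-1]"]) (use \<open>x$2 - x$3 \<ge> 0\<close> x1 in \<open>simp add: Bset_def\<close>)
  qed
  have "(\<lambda>n. x + inverse (real (Suc n)) *\<^sub>R e) \<longlonglongrightarrow> x + 0 *\<^sub>R e"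
    by (intro tendsto_intros LIMSEQ_inverse_real_of_nat)
  then show "x \<in> closure Bset" unfolding closure_sequential
    using e by (intro exI[of _ "\<lambda>n. x + inverse (real (Suc n)) *\<^sub>R e"]) simp
qed

lemma stem_closure:
  assumes u: "unit_spacelike u"
  shows "stem u v \<subseteq> closure (crooked_halfspace u v)"
proof -
  define g where "g = gsel u"
  have g: "g \<in> SO0" "g *v v0 = u" using gsel_ok[OF u] by (auto simp: g_def)
  have pres: "\<And>x y. mB (g *v x) (g *v y) = mB x y" and det: "det g = 1" and g33: "g$3$3 > 0"
    using g(1) by (auto simp: SO0_def)
  have inj: "inj ((*v) g)" using det by (intro inj_matrix_vector_mult) (simp add: invertible_det_nz)
  define f where "f = (\<lambda>x. v + g *v x)"
  define \<epsilon> where "\<epsilon> = min (1/2) (g$3$3 / (2*(\<bar>g$3$1\<bar>+1)))"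
  have ep0: "\<epsilon> > 0" "\<epsilon> \<le> 1/2" "\<epsilon> \<le> g$3$3 / (2*(\<bar>g$3$1\<bar>+1))"
  proof -
    show "\<epsilon> \<le> 1/2" unfolding \<epsilon>_def by (rule min.cobounded1)
    show "\<epsilon> \<le> g$3$3 / (2*(\<bar>g$3$1\<bar>+1))" unfolding \<epsilon>_def by (rule min.cobounded2)
    have "g$3$3 / (2*(\<bar>g$3$1\<bar>+1)) > 0" using g33 by (intro divide_pos_pos) auto
    then show "\<epsilon> > 0" unfolding \<epsilon>_def by simp
  qed
  have "\<epsilon> * (2*(\<bar>g$3$1\<bar>+1)) \<le> g$3$3" using ep0(3)
    by (simp add: pos_le_divide_eq)
  then have ep: "\<epsilon> > 0" "\<epsilon> \<le> 1/2" "\<epsilon> * (\<bar>g$3$1\<bar>+1) \<le> g$3$3 / 2"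
    using ep0 by (auto simp: algebra_simps)
  define y0 where "y0 = (vector [\<epsilon>, 0, 1] :: pt)"
  have "(g *v y0)$3 = g$3$1 * \<epsilon> + g$3$3"
    by (simp add: matrix_vector_mult_def sum_3 y0_def)
  moreover have "g$3$1 * \<epsilon> \<ge> - (\<epsilon> * (\<bar>g$3$1\<bar>+1))"
  proof -
    have "-(\<bar>g$3$1\<bar>+1) \<le> g$3$1" by linarith
    from mult_right_mono[OF this less_imp_le[OF ep(1)]] show ?thesis by (simp add: algebra_simps)
  qed
  ultimately have c3: "(g *v y0)$3 > 0" using ep g33 by linarith
  have "mB (g *v y0) (g *v y0) = \<epsilon>^2 - 1" unfolding pres by (simp add: mB_def y0_def power2_eq_square)
  moreover have "\<epsilon>^2 - 1 < 0"
  proof -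
    have "\<epsilon> * \<epsilon> \<le> 1/2 * (1/2)" using ep by (intro mult_mono) auto
    then show ?thesis by (simp add: power2_eq_square)
  qed
  moreover have "mB (g *v y0) u = \<epsilon>" unfolding g(2)[symmetric] pres by (simp add: mB_def y0_def v0_def)
  ultimately have hc: "g *v y0 \<in> hs_cone u" using c3 ep by (simp add: hs_cone_def)
  have y0B: "y0 \<in> Bset" using ep by (simp add: Bset_def y0_def)
  have contf: "continuous_on UNIV f" unfolding f_def by (intro continuous_intros)
  have conn: "connected (f ` Bset)" using Bset_conn contf
    by (meson connected_continuous_image continuous_on_subset subset_UNIV)
  have disj: "f ` Bset \<subseteq> - crooked_plane u v"
  proof
    fix y assume "y \<in> f ` Bset"
    then obtain b where b: "b \<in> Bset" "y = f b" by auto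
    show "y \<in> - crooked_plane u v"
    proof
      assume "y \<in> crooked_plane u v"
      then obtain c where c: "c \<in> C0" "y = v + gsel u *v c" by (auto simp: crooked_plane_def)
      then have "g *v b = g *v c" using b by (simp add: f_def g_def)
      then have "b = c" using inj by (simp add: inj_eq)
      then show False using b c Bset_C0 by auto
    qed
  qed
  have "f ` Bset \<subseteq> connected_component_set (- crooked_plane u v) (f y0)"
    by (rule connected_component_maximal) (use y0B conn disj in auto)
  moreover have "f y0 \<in> (\<lambda>w. v + w) ` hs_cone u" using hc by (simp add: f_def)
  ultimately have sub: "f ` Bset \<subseteq> crooked_halfspace u v"
    unfolding crooked_halfspace_def by blast
  have "f ` closure Bset \<subseteq> closure (f ` Bset)"
    by (rule image_closure_subset) (use contf continuous_on_subset closure_subset in \<open>auto intro: closure_subset[THEN subsetD]\<close>)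
  then have "f ` S0 \<subseteq> closure (crooked_halfspace u v)"
    using S0_closure sub closure_mono by blast
  then show ?thesis unfolding stem_def f_def g_def .
qed



definition affinv :: "(pt \<Rightarrow> pt) \<Rightarrow> bool" where
  "affinv f \<longleftrightarrow> (\<exists>A b. invertible (A::real^3^3) \<and> f = (\<lambda>x. A *v x + b))"

lemma mv_neg[simp]: "(A::real^3^3) *v (- x) = - (A *v x)"
  by (simp add: vec_eq_iff matrix_vector_mult_def sum_negf)

lemma affinv_inv_eq:
  fixes A B :: "real^3^3" and b :: pt
  assumes "invertible A" "A ** B = mat 1" "B ** A = mat 1"
  shows "inv (\<lambda>x. A *v x + b) = (\<lambda>y. B *v y + (- (B *v b)))"
proof (rule inv_equality)
  fix x show "B *v (A *v x + b) + - (B *v b) = x"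
    using assms by (simp add: matrix_vector_right_distrib matrix_vector_mul_assoc add.assoc)
next
  fix y show "A *v (B *v y + - (B *v b)) + b = y"
    using assms by (simp add: matrix_vector_right_distrib matrix_vector_mul_assoc matrix_vector_right_distrib matrix_vector_mult_diff_distrib)
qed

lemma affinv_bij: "affinv f \<Longrightarrow> bij f"
proof -
  assume "affinv f"
  then obtain A b where A: "invertible A" and f: "f = (\<lambda>x. A *v x + b)" by (auto simp: affinv_def)
  obtain B where B: "A ** B = mat 1" "B ** A = mat 1" using A by (auto simp: invertible_def)
  show "bij f" unfolding f
  proof (rule bij_betw_byWitness[where f'="\<lambda>y. B *v y + (- (B *v b))"])
    show "\<forall>a\<in>UNIV. B *v (A *v a + b) + - (B *v b) = a"
      using B by (simp add: matrix_vector_right_distrib matrix_vector_mul_assoc)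
    show "\<forall>a'\<in>UNIV. A *v (B *v a' + - (B *v b)) + b = a'"
      using B by (simp add: matrix_vector_right_distrib matrix_vector_mul_assoc matrix_vector_right_distrib matrix_vector_mult_diff_distrib)
  qed auto
qed

lemma affinv_inv: "affinv f \<Longrightarrow> affinv (inv f)"
proof -
  assume "affinv f"
  then obtain A b where A: "invertible A" and f: "f = (\<lambda>x. A *v x + b)" by (auto simp: affinv_def)
  obtain B where B: "A ** B = mat 1" "B ** A = mat 1" using A by (auto simp: invertible_def)
  have "invertible B" using B by (auto simp: invertible_def)
  then show ?thesis unfolding f affinv_inv_eq[OF A B] affinv_def by blast
qed

lemma affinv_comp: "affinv f \<Longrightarrow> affinv g \<Longrightarrow> affinv (f \<circ> g)"
proof -
  assume "affinv f" "affinv g"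
  then obtain A b B c where A: "invertible A" "f = (\<lambda>x. A *v x + b)"
    and B: "invertible B" "g = (\<lambda>x. B *v x + c)" by (auto simp: affinv_def)
  have "f \<circ> g = (\<lambda>x. (A ** B) *v x + (A *v c + b))"
    by (auto simp: A B fun_eq_iff matrix_vector_right_distrib matrix_vector_mul_assoc matrix_vector_right_distrib matrix_vector_mult_diff_distrib)
  then show ?thesis unfolding affinv_def using invertible_mult[OF A(1) B(1)] by blast
qed

lemma affinv_cont: "affinv f \<Longrightarrow> continuous (at x) f"
  unfolding affinv_def by (auto intro!: continuous_intros)

lemma affinv_open: "affinv f \<Longrightarrow> open S \<Longrightarrow> open (f ` S)"
proof -
  assume f: "affinv f" and S: "open S"
  have "f ` S = inv f -` S" using affinv_bij[OF f]
    by (metis bij_imp_bij_inv bij_vimage_eq_inv_image inv_inv_eq)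
  then show ?thesis using continuous_open_vimage[OF S affinv_cont[OF affinv_inv[OF f]]] by simp
qed

lemma affinv_convex: "affinv f \<Longrightarrow> convex S \<Longrightarrow> convex (f ` S)"
proof -
  assume "affinv f" "convex S"
  then obtain A b where f: "f = (\<lambda>x. A *v x + b)" by (auto simp: affinv_def)
  have "f ` S = (+) b ` ((*v) A ` S)" by (auto simp: f image_image add.commute)
  moreover have "convex ((*v) A ` S)" using \<open>convex S\<close> by (intro convex_linear_image) (auto intro: matrix_vector_mul_linear)
  ultimately show ?thesis using convex_translation by metis
qed

lemma affinv_compl: "affinv f \<Longrightarrow> f ` (- S) = - (f ` S)"
  using affinv_bij bij_image_Compl_eq by blast

lemma isom0_affinv: "isom0 f \<Longrightarrow> affinv f"
  unfolding isom0_def affinv_def SO0_def by (auto simp: invertible_det_nz) (metis zero_neq_one)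

lemma nbhd_open: "open (nbhd S \<delta>)"
proof -
  have "nbhd S \<delta> = (\<Union>s\<in>S. ball s \<delta>)" by (auto simp: nbhd_def ball_def dist_commute)
  then show ?thesis by auto
qed

lemma nbhd_convex: assumes "convex S" shows "convex (nbhd S \<delta>)"
  unfolding convex_def
proof (intro allI impI ballI)
  fix x y u v :: real assume "0 \<le> u" "0 \<le> v" "u + v = 1"
  fix x y assume "x \<in> nbhd S \<delta>" "y \<in> nbhd S \<delta>"
  then obtain s t where st: "s \<in> S" "t \<in> S" "dist x s < \<delta>" "dist y t < \<delta>" by (auto simp: nbhd_def)
  have m: "u *\<^sub>R s + v *\<^sub>R t \<in> S" using assms st \<open>0 \<le> u\<close> \<open>0 \<le> v\<close> \<open>u + v = 1\<close> by (auto simp: convex_def)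
  have "dist (u *\<^sub>R x + v *\<^sub>R y) (u *\<^sub>R s + v *\<^sub>R t) \<le> u * dist x s + v * dist y t"
  proof -
    have "dist (u *\<^sub>R x + v *\<^sub>R y) (u *\<^sub>R s + v *\<^sub>R t) = norm (u *\<^sub>R (x - s) + v *\<^sub>R (y - t))"
      by (simp add: dist_norm algebra_simps)
    also have "\<dots> \<le> norm (u *\<^sub>R (x - s)) + norm (v *\<^sub>R (y - t))" by (rule norm_triangle_ineq)
    also have "\<dots> = u * dist x s + v * dist y t" using \<open>0 \<le> u\<close> \<open>0 \<le> v\<close> by (simp add: dist_norm)
    finally show ?thesis .
  qed
  also have "\<dots> < \<delta>"
    using st \<open>0 \<le> u\<close> \<open>0 \<le> v\<close> \<open>u + v = 1\<close> by (intro convex_bound_lt) auto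
  finally show "u *\<^sub>R x + v *\<^sub>R y \<in> nbhd S \<delta>" using m unfolding nbhd_def by blast
qed



lemma C0_closed: "closed C0"
proof -
  have "C0 = ({x. x$1 \<le> 0} \<inter> {x. x$2 = x$3}) \<union> ({x. x$1 = 0} \<inter> {x. \<bar>x$2\<bar> \<le> \<bar>x$3\<bar>})
      \<union> ({x. 0 \<le> x$1} \<inter> {x. x$2 = - x$3})"
    by (auto simp: C0_def W0m_def W0p_def S0_def)
  moreover have "closed \<dots>"
    by (intro closed_Un closed_Int closed_Collect_le closed_Collect_eq continuous_intros)
  ultimately show ?thesis by simp
qed

lemma CH_open:
  assumes u: "unit_spacelike u"
  shows "open (crooked_halfspace u v)"
proof -
  have g: "det (gsel u) = 1" using gsel_ok[OF u] by (auto simp: SO0_def)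
  have inj: "inj ((*v) (gsel u))" using g by (intro inj_matrix_vector_mult) (simp add: invertible_det_nz)
  have "crooked_plane u v = (+) v ` ((*v) (gsel u) ` C0)"
    by (auto simp: crooked_plane_def image_image)
  moreover have "closed ((*v) (gsel u) ` C0)"
    by (rule closed_injective_linear_image[OF C0_closed matrix_vector_mul_linear inj])
  ultimately have "closed (crooked_plane u v)" using closed_translation by metis
  then have "open (- crooked_plane u v)" by auto
  then show ?thesis unfolding crooked_halfspace_def
    by (auto intro!: open_Union open_connected_component)
qed



theorem mainTheorem12:
  fixes m :: nat
    and h :: "nat \<Rightarrow> pt \<Rightarrow> pt"
    and U V :: "nat \<Rightarrow> int \<Rightarrow> pt"
    and H :: "nat \<Rightarrow> int \<Rightarrow> pt set"
    and \<delta>0 :: real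
    and p :: pt
    and ik :: "nat \<Rightarrow> nat" and jk :: "nat \<Rightarrow> int"
    and W :: "pt set" and P :: "pt set"
    and d :: pt
    and L :: "nat \<Rightarrow> pt set"
  assumes h_isom: "\<forall>i\<in>{1..m}. isom0 (h i)"
    and H_def: "\<forall>(i, j)\<in>Idx m. unit_spacelike (U i j) \<and> H i j = crooked_halfspace (U i j) (V i j)"
    and H_disj: "\<forall>(i, j)\<in>Idx m. \<forall>(i', j')\<in>Idx m. (i, j) \<noteq> (i', j') \<longrightarrow> H i j \<inter> H i' j' = {}"
    and H_pair: "\<forall>i\<in>{1..m}. h i ` H i (-1) = - closure (H i 1)"
    and \<delta>0_pos: "\<delta>0 > 0"
    and \<delta>0_prop: "\<forall>(i, j)\<in>Idx m. \<forall>(i', j')\<in>Idx m. (i, j) \<noteq> (i', - j') \<longrightarrow>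
                    nbhd (- H i j) \<delta>0 \<subseteq> - (hpow h i j ` closure (H i' j'))"
    and p_notin: "p \<notin> (\<Union>\<gamma>\<in>genGroup m h. \<gamma> ` closure (- (\<Union>(i, j)\<in>Idx m. closure (H i j))))"
    and seq_idx: "\<forall>k. (ik k, jk k) \<in> Idx m"
    and seq_red: "\<forall>k. (ik k, jk k) \<noteq> (ik (Suc k), - jk (Suc k))"
    and nested: "\<forall>k. gam h ik jk (Suc k) ` H (ik (Suc k)) (jk (Suc k)) \<subset> gam h ik jk k ` H (ik k) (jk k)"
    and p_in: "\<forall>k. p \<in> gam h ik jk k ` H (ik k) (jk k)"
    and angle0: "hs_angle (U (ik 0) (jk 0)) < pi / 2"
    and W_sub: "subspace W" and W_dim: "dim W = 2"
    and W_def: "\<forall>w\<in>W. w \<noteq> 0 \<longrightarrow> mB w w > 0"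
    and P_def: "P = (\<lambda>w. p + w) ` W"
    and P_novertex: "\<forall>\<gamma>\<in>genGroup m h. \<forall>(i, j)\<in>Idx m. \<gamma> (V i j) \<notin> P"
    and d_dir: "d \<in> W" "d \<noteq> 0"
    and d_par: "\<exists>a b. P \<inter> stem (U (ik 0) (jk 0)) (V (ik 0) (jk 0)) = closed_segment a b
                  \<and> (\<exists>t. b - a = t *\<^sub>R d)"
    and L_def: "\<forall>k. \<exists>c a b.
        P \<inter> gam h ik jk k ` stem (U (ik k) (jk k)) (V (ik k) (jk k)) = closed_segment a b
        \<and> (c = a \<or> c = b)
        \<and> L k = {x \<in> P. (x - c) \<bullet> d = 0}
        \<and> (gam h ik jk k ` H (ik k) (jk k) \<inter> P \<subseteq> {x \<in> P. (x - c) \<bullet> d \<le> 0}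
           \<or> gam h ik jk k ` H (ik k) (jk k) \<inter> P \<subseteq> {x \<in> P. (x - c) \<bullet> d \<ge> 0})"
  shows "\<forall>\<delta>. \<delta> \<le> \<delta>0 \<longrightarrow> (\<forall>k.
           gam h ik jk k ` nbhd (inv (gam h ik jk k) ` L k) \<delta> \<inter> L (Suc k) = {})"
proof (intro allI impI)
  fix \<delta> :: real and k :: nat
  assume \<delta>le: "\<delta> \<le> \<delta>0"
  define \<gamma> where "\<gamma> = gam h ik jk k"
  define \<gamma>' where "\<gamma>' = gam h ik jk (Suc k)"
  define i j i' j' where "i = ik k" "j = jk k" "i' = ik (Suc k)" "j' = jk (Suc k)"
  have ij: "(i, j) \<in> Idx m" "(i', j') \<in> Idx m" using seq_idx by (auto simp: i_j_i'_j'_def)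
  have hp_aff: "\<And>i j. (i, j) \<in> Idx m \<Longrightarrow> affinv (hpow h i j)"
  proof -
    fix i j assume "(i, j) \<in> Idx m"
    then have "i \<in> {1..m}" by (auto simp: Idx_def)
    then have "affinv (h i)" using h_isom isom0_affinv by blast
    then show "affinv (hpow h i j)" by (auto simp: hpow_def intro: affinv_inv)
  qed
  have gam_aff: "\<And>n. affinv (gam h ik jk n)"
  proof -
    fix n show "affinv (gam h ik jk n)"
    proof (induction n)
      case 0
      have "invertible (mat 1 :: real^3^3)" by (auto simp: invertible_def)
      then show ?case unfolding affinv_def gam.simps
        by (intro exI[of _ "mat 1"] exI[of _ "0::pt"] conjI) (simp_all add: fun_eq_iff)
    next
      case (Suc n)
      have "affinv (gam h ik jk n \<circ> hpow h (ik n) (jk n))"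
        using Suc hp_aff seq_idx by (intro affinv_comp) auto
      then show ?case by (simp only: gam.simps)
    qed
  qed
  have aff: "affinv \<gamma>" unfolding \<gamma>_def by (rule gam_aff)
  have \<gamma>'_eq: "\<gamma>' = \<gamma> \<circ> hpow h i j" by (simp add: \<gamma>'_def \<gamma>_def i_j_i'_j'_def)
  have bij: "bij \<gamma>" using affinv_bij[OF aff] .
  have us: "unit_spacelike (U i j)" "H i j = crooked_halfspace (U i j) (V i j)"
    "unit_spacelike (U i' j')" "H i' j' = crooked_halfspace (U i' j') (V i' j')"
    using H_def ij by auto
  define T where "T = \<gamma> ` nbhd (inv \<gamma> ` L k) \<delta>"
  show "\<gamma> ` nbhd (inv \<gamma> ` L k) \<delta> \<inter> L (Suc k) = {}" (is "?T \<inter> _ = {}")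
  proof (cases "\<delta> > 0")
    case False
    have "\<not> dist x s < \<delta>" for x s :: pt using False zero_le_dist[of x s] by linarith
    then have "nbhd (inv \<gamma> ` L k) \<delta> = {}" by (auto simp: nbhd_def)
    then show ?thesis by simp
  next
    case True
    obtain c a b where Lk: "P \<inter> \<gamma> ` stem (U i j) (V i j) = closed_segment a b" "c = a \<or> c = b"
      "L k = {x \<in> P. (x - c) \<bullet> d = 0}"
      "\<gamma> ` H i j \<inter> P \<subseteq> {x \<in> P. (x - c) \<bullet> d \<le> 0} \<or> \<gamma> ` H i j \<inter> P \<subseteq> {x \<in> P. (x - c) \<bullet> d \<ge> 0}"
      using L_def unfolding \<gamma>_def i_j_i'_j'_def by blast
    obtain c' a' b' where Lk': "P \<inter> \<gamma>' ` stem (U i' j') (V i' j') = closed_segment a' b'" "c' = a' \<or> c' = b'"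
      "L (Suc k) = {x \<in> P. (x - c') \<bullet> d = 0}"
      using L_def unfolding \<gamma>'_def i_j_i'_j'_def by blast
    have Pw: "\<And>x w. x \<in> P \<Longrightarrow> w \<in> W \<Longrightarrow> x + w \<in> P"
    proof -
      fix x w assume "x \<in> P" "w \<in> W"
      then obtain w0 where "w0 \<in> W" "x = p + w0" using P_def by auto
      moreover have "w0 + w \<in> W" using subspace_add[OF W_sub \<open>w0 \<in> W\<close> \<open>w \<in> W\<close>] .
      ultimately show "x + w \<in> P" unfolding P_def by (simp add: add.assoc)
    qed
    have Pd: "\<And>x y. x \<in> P \<Longrightarrow> y \<in> P \<Longrightarrow> x - y \<in> W"
    proof -
      fix x y assume "x \<in> P" "y \<in> P"
      then obtain w1 w2 where "w1 \<in> W" "x = p + w1" "w2 \<in> W" "y = p + w2" using P_def by auto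
      then show "x - y \<in> W" using subspace_diff[OF W_sub \<open>w1 \<in> W\<close> \<open>w2 \<in> W\<close>] by simp
    qed
    have cP: "c \<in> P" using Lk(1,2) by auto
    have cL: "c \<in> L k" using cP Lk(3) by simp
    have dd: "d \<bullet> d > 0" using d_dir by simp
    have opH: "open (\<gamma> ` H i j)" using affinv_open[OF aff] CH_open[OF us(1)] us(2) by simp
    have L_disj: "L k \<inter> \<gamma> ` H i j = {}"
    proof (rule ccontr)
      assume "L k \<inter> \<gamma> ` H i j \<noteq> {}"
      then obtain x where x: "x \<in> L k" "x \<in> \<gamma> ` H i j" by auto
      obtain e where e: "e > 0" "ball x e \<subseteq> \<gamma> ` H i j" using opH x(2) open_contains_ball by blast
      define t where "t = e / (2 * norm d)"
      have t: "t > 0" "t * norm d < e" using e d_dir by (auto simp: t_def)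
      have xP: "x \<in> P" "(x - c) \<bullet> d = 0" using x Lk(3) by auto
      have mem: "x + s *\<^sub>R d \<in> \<gamma> ` H i j \<inter> P" if "\<bar>s\<bar> = t" for s
      proof -
        have "dist x (x + s *\<^sub>R d) < e" using t that by (simp add: dist_norm)
        then have "x + s *\<^sub>R d \<in> \<gamma> ` H i j" using e by auto
        moreover have "x + s *\<^sub>R d \<in> P" using Pw[OF xP(1) subspace_scale[OF W_sub d_dir(1)]] .
        ultimately show ?thesis by simp
      qed
      have val: "(x + s *\<^sub>R d - c) \<bullet> d = s * (d \<bullet> d)" for s
        using xP(2) by (simp add: algebra_simps inner_add_left)
      from Lk(4) show False
      proof
        assume "\<gamma> ` H i j \<inter> P \<subseteq> {x \<in> P. (x - c) \<bullet> d \<le> 0}"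
        then have "(x + t *\<^sub>R d - c) \<bullet> d \<le> 0" using mem[of t] t by auto
        moreover have "t * (d \<bullet> d) > 0" using t(1) dd by (rule mult_pos_pos)
        ultimately show False using val[of t] by linarith
      next
        assume "\<gamma> ` H i j \<inter> P \<subseteq> {x \<in> P. (x - c) \<bullet> d \<ge> 0}"
        then have "(x + (-t) *\<^sub>R d - c) \<bullet> d \<ge> 0" using mem[of "-t"] t by auto
        moreover have "t * (d \<bullet> d) > 0" using t(1) dd by (rule mult_pos_pos)
        ultimately show False using val[of "-t"] by linarith
      qed
    qed
    have sub1: "inv \<gamma> ` L k \<subseteq> - H i j"
    proof
      fix y assume "y \<in> inv \<gamma> ` L k"
      then obtain x where x: "x \<in> L k" "y = inv \<gamma> x" by auto
      have "\<gamma> y = x" using x bij by (simp add: bij_is_surj surj_f_inv_f)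
      then show "y \<in> - H i j" using L_disj x by (metis ComplI disjoint_iff image_eqI)
    qed
    have red: "(i, j) \<noteq> (i', - j')" using seq_red by (simp add: i_j_i'_j'_def)
    have "nbhd (inv \<gamma> ` L k) \<delta> \<subseteq> nbhd (- H i j) \<delta>0"
    proof
      fix x assume "x \<in> nbhd (inv \<gamma> ` L k) \<delta>"
      then obtain s where "s \<in> inv \<gamma> ` L k" "dist x s < \<delta>" by (auto simp: nbhd_def)
      then have "s \<in> - H i j" "dist x s < \<delta>0" using sub1 \<delta>le by auto
      then show "x \<in> nbhd (- H i j) \<delta>0" unfolding nbhd_def by blast
    qed
    also have "\<dots> \<subseteq> - (hpow h i j ` closure (H i' j'))"
    proof -
      have "case (i, j) of (i, j) \<Rightarrow> \<forall>(i', j')\<in>Idx m. (i, j) \<noteq> (i', - j') \<longrightarrow>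
                    nbhd (- H i j) \<delta>0 \<subseteq> - (hpow h i j ` closure (H i' j'))"
        by (rule bspec[OF \<delta>0_prop ij(1)])
      then have "\<forall>(i', j')\<in>Idx m. (i, j) \<noteq> (i', - j') \<longrightarrow>
                    nbhd (- H i j) \<delta>0 \<subseteq> - (hpow h i j ` closure (H i' j'))" by (simp only: prod.case)
      then have "case (i', j') of (i', j') \<Rightarrow> (i, j) \<noteq> (i', - j') \<longrightarrow>
                    nbhd (- H i j) \<delta>0 \<subseteq> - (hpow h i j ` closure (H i' j'))"
        by (rule bspec[OF _ ij(2)])
      then show ?thesis using red by simp
    qed
    finally have "T \<subseteq> \<gamma> ` (- (hpow h i j ` closure (H i' j')))" unfolding T_def by (rule image_mono)
    also have "\<dots> = - (\<gamma>' ` closure (H i' j'))"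
      using affinv_compl[OF aff] by (simp add: \<gamma>'_eq image_comp)
    finally have Tsub: "T \<subseteq> - (\<gamma>' ` closure (H i' j'))" .
    have "c' \<in> P \<inter> \<gamma>' ` stem (U i' j') (V i' j')" using Lk'(1,2) by auto
    then have c'in: "c' \<in> \<gamma>' ` closure (H i' j')" "c' \<in> P"
      using stem_closure[OF us(3)] us(4) by auto
    show ?thesis
    proof (rule ccontr)
      assume "?T \<inter> L (Suc k) \<noteq> {}"
      then obtain z where z: "z \<in> T" "z \<in> L (Suc k)" unfolding T_def by auto
      have zP: "z \<in> P" "(z - c') \<bullet> d = 0" using z(2) Lk'(3) by auto
      have Topen: "open T" unfolding T_def using affinv_open[OF aff nbhd_open] .
      have convL: "convex (L k)"
      proof -
        have "P = (+) p ` W" unfolding P_def by (rule refl)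
        then have cP: "convex P" using convex_translation[OF subspace_imp_convex[OF W_sub]] by simp
        moreover have "L k = P \<inter> {x. d \<bullet> x = d \<bullet> c}"
        proof -
          have "\<And>x. (x - c) \<bullet> d = 0 \<longleftrightarrow> d \<bullet> x = d \<bullet> c"
            by (simp add: inner_diff_left inner_commute[of d])
          then show ?thesis using Lk(3) by blast
        qed
        then show ?thesis using convex_Int[OF cP convex_hyperplane] by simp
      qed
      have Tconv: "convex T" unfolding T_def
        by (intro affinv_convex[OF aff] nbhd_convex affinv_convex[OF affinv_inv[OF aff]] convL)
      have LT: "L k \<subseteq> T"
      proof
        fix x assume x: "x \<in> L k"
        have "inv \<gamma> x \<in> inv \<gamma> ` L k" using x by (rule imageI)
        then have "inv \<gamma> x \<in> nbhd (inv \<gamma> ` L k) \<delta>" using True unfolding nbhd_def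
          by (intro CollectI bexI[of _ "inv \<gamma> x"]) auto
        then have "\<gamma> (inv \<gamma> x) \<in> T" unfolding T_def by (rule imageI)
        moreover have gx: "\<gamma> (inv \<gamma> x) = x" using bij by (simp add: bij_is_surj surj_f_inv_f)
        ultimately show "x \<in> T" by simp
      qed
      define w where "w = c' - z"
      have wW: "w \<in> W" using Pd c'in(2) zP(1) by (simp add: w_def)
      have wd: "w \<bullet> d = 0" using zP(2) by (simp add: w_def inner_diff_left)
      obtain e where e: "e > 0" "ball z e \<subseteq> T" using Topen z(1) open_contains_ball by blast
      have npos: "norm (z - c) + 1 > 0" by (rule add_nonneg_pos) simp_all
      define l where "l = min (1/2) (e / (4 * (norm (z - c) + 1)))"
      have lam: "l > 0" "l \<le> 1/2" "l \<le> e / (4 * (norm (z - c) + 1))"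
      proof -
        show "l \<le> 1/2" unfolding l_def by (rule min.cobounded1)
        show "l \<le> e / (4 * (norm (z - c) + 1))" unfolding l_def by (rule min.cobounded2)
        have "norm (z - c) + 1 > 0" by (rule add_nonneg_pos) simp_all
        then have "4 * (norm (z - c) + 1) > 0" by (rule mult_pos_pos[rotated]) simp
        then have "e / (4 * (norm (z - c) + 1)) > 0" using e by (intro divide_pos_pos) auto
        then show "l > 0" unfolding l_def by simp
      qed
      define z2 where "z2 = (1 / (1 - l)) *\<^sub>R (z - l *\<^sub>R c)"
      define q where "q = c + (1 / l) *\<^sub>R w"
      have qL: "q \<in> L k"
      proof -
        have "q \<in> P" unfolding q_def using Pw[OF cP subspace_scale[OF W_sub wW]] .
        moreover have "(q - c) \<bullet> d = 0" using wd by (simp add: q_def)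
        ultimately show ?thesis using Lk(3) by simp
      qed
      have ne: "1 - l \<noteq> 0" "l \<noteq> 0" using lam by auto
      have z2m: "(1 - l) *\<^sub>R z2 = z - l *\<^sub>R c" using ne by (simp add: z2_def)
      have "(1 - l) *\<^sub>R (z2 - z) = l *\<^sub>R (z - c)"
        by (simp only: scaleR_diff_right z2m) (simp add: algebra_simps)
      then have "(1 / (1 - l)) *\<^sub>R ((1 - l) *\<^sub>R (z2 - z)) = (1 / (1 - l)) *\<^sub>R (l *\<^sub>R (z - c))"
        by simp
      then have z2z: "z2 - z = (l / (1 - l)) *\<^sub>R (z - c)" using ne(1) by simp
      have "norm (z2 - z) = (l / (1 - l)) * norm (z - c)"
        using lam unfolding z2z by simp
      also have "\<dots> \<le> (2 * l) * norm (z - c)"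
      proof (rule mult_right_mono)
        have e1: "2*l*(1-l) - l = l*(1 - 2*l)" by (simp add: algebra_simps)
        have "l*(1 - 2*l) \<ge> 0" using lam by (intro mult_nonneg_nonneg) auto
        then have "l \<le> 2 * l * (1 - l)" using e1 by linarith
        then show "l / (1 - l) \<le> 2 * l" using lam by (subst pos_divide_le_eq) auto
      qed simp
      also have "\<dots> \<le> 2 * (e / (4 * (norm (z - c) + 1))) * (norm (z - c) + 1)"
        using lam by (intro mult_mono) auto
      also have "\<dots> = e / 2" using npos by (simp add: field_simps)
      also have "\<dots> < e" using e by simp
      finally have "z2 \<in> ball z e" by (simp add: dist_norm norm_minus_commute)
      then have z2T: "z2 \<in> T" using e by auto
      have "l *\<^sub>R q = l *\<^sub>R c + w" using ne(2) by (simp add: q_def scaleR_add_right)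
      then have comb: "(1 - l) *\<^sub>R z2 + l *\<^sub>R q = c'"
        by (simp add: z2m w_def)
      have "(1 - l) *\<^sub>R z2 + l *\<^sub>R q \<in> T"
        by (rule convexD[OF Tconv z2T]) (use LT qL lam in auto)
      then have "c' \<in> T" by (simp only: comb)
      then show False using Tsub c'in(1) by auto
    qed
  qed
qed

end
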